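(* Consider $\mathrm{DSS}(n,k,d,1,\alpha,\alpha',\beta,M)$ operating at the MBR point, i.e. $\alpha=(d+1)\beta$ and $M=\sum_{i=0}^{k-1}(d+1-i)\beta$, and suppose that under every sequence of failures/repairs (each repair using $\beta$ packets from each of $d$ surviving complete nodes and from the single repairing node) every $k$ complete nodes can reconstruct the file. Then $\alpha'\ge k\beta$.
   Context: $\mathrm{DSS}(n,k,d,h,\alpha,\alpha',\beta,M)$: a file of $M$ packets is stored on $n$ complete storage nodes of capacity $\alpha$ each so that any $k$ of them reconstruct the file; in addition there are $h$ repairing storage nodes of capacity $\alpha'<\alpha$, which never fail and are never contacted by data collectors. When a complete node fails, a new node is created from $\beta$ packets received from each of $d$ surviving complete nodes and from each of the $h$ repairing nodes; repair is functional. Quantities $\alpha,\alpha',\beta$ are nonnegative integers. *)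

theory Defs
  imports Main
begin

text \<open>Packets are elements of a finite alphabet 'p (at least two symbols).  A configuration is a pair (c, r):
  c i f is the content (list of packets) of complete node i (i < n) when the file is f,
  r f is the content of the single repairing node.  Contents are arbitrary (deterministic)
  functions of the file; repair is functional.\<close>

definition files :: "nat \<Rightarrow> 'p list set" where
  "files M = {xs. length xs = M}"

type_synonym 'p config = "(nat \<Rightarrow> 'p list \<Rightarrow> 'p list) \<times> ('p list \<Rightarrow> 'p list)"

definition valid_config :: "nat \<Rightarrow> nat \<Rightarrow> nat \<Rightarrow> nat \<Rightarrow> 'p config \<Rightarrow> bool" where
  "valid_config n \<alpha> \<alpha>' M cr \<longleftrightarrow>
     (\<forall>i<n. \<forall>f\<in>files M. length (fst cr i f) = \<alpha>) \<and>
     (\<forall>f\<in>files M. length (snd cr f) = \<alpha>')"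

definition reconstructs :: "nat \<Rightarrow> nat \<Rightarrow> nat \<Rightarrow> 'p config \<Rightarrow> bool" where
  "reconstructs n k M cr \<longleftrightarrow>
     (\<forall>K. K \<subseteq> {..<n} \<longrightarrow> card K = k \<longrightarrow>
        (\<forall>f\<in>files M. \<forall>g\<in>files M. (\<forall>i\<in>K. fst cr i f = fst cr i g) \<longrightarrow> f = g))"

definition repaired :: "'p config \<Rightarrow> nat \<Rightarrow> nat set \<Rightarrow> (nat \<Rightarrow> 'p list \<Rightarrow> 'p list)
    \<Rightarrow> ('p list \<Rightarrow> 'p list) \<Rightarrow> ('p list \<Rightarrow> 'p list) \<Rightarrow> 'p config" where
  "repaired cr j H msg msg0 dec =
     ((fst cr)(j := (\<lambda>f. dec (concat (map (\<lambda>i. msg i (fst cr i f)) (sorted_list_of_set H))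
                              @ msg0 (snd cr f)))),
      snd cr)"

text \<open>A DSS that keeps working under every sequence of failures/repairs: there is a
  nonempty set S of configurations (the configurations reachable under the repair strategy),
  all of which respect the storage constraints and the reconstruction property, such that for
  every configuration in S, every failed node j and every choice of d surviving helpers, there
  is a repair (beta packets from each helper and from the repairing node) leading back into S.\<close>
definition working_DSS :: "nat \<Rightarrow> nat \<Rightarrow> nat \<Rightarrow> nat \<Rightarrow> nat \<Rightarrow> nat \<Rightarrow> nat \<Rightarrow> 'p config set \<Rightarrow> bool" where
  "working_DSS n k d \<alpha> \<alpha>' \<beta> M S \<longleftrightarrow>
     S \<noteq> {} \<and>
     (\<forall>cr\<in>S. valid_config n \<alpha> \<alpha>' M cr \<and> reconstructs n k M cr) \<and>
     (\<forall>cr\<in>S. \<forall>j<n. \<forall>H. H \<subseteq> {..<n} - {j} \<longrightarrow> card H = d \<longrightarrow>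
        (\<exists>msg msg0 dec.
           (\<forall>i\<in>H. \<forall>f\<in>files M. length (msg i (fst cr i f)) = \<beta>) \<and>
           (\<forall>f\<in>files M. length (msg0 (snd cr f)) = \<beta>) \<and>
           repaired cr j H msg msg0 dec \<in> S))"

end

theory Submission
  imports Defs
begin

definition psi :: "'p config \<Rightarrow> nat \<Rightarrow> 'p list \<Rightarrow> (nat \<Rightarrow> 'p list) \<times> 'p list" where
  "psi cr t f = ((\<lambda>i. if i < t then fst cr i f else []), snd cr f)"

lemma files_lists: "files M = {xs. set xs \<subseteq> (UNIV::'p::finite set) \<and> length xs = M}"
  unfolding files_def by auto

lemma finite_files: "finite (files M :: ('p::finite) list set)"
  unfolding files_lists by (rule finite_lists_length_eq) simp

lemma card_files: "card (files M :: ('p::finite) list set) = card (UNIV::'p set) ^ M"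
  unfolding files_lists by (rule card_lists_length_eq) simp

lemma card_image_factor:
  assumes "finite A" "\<And>f. f \<in> A \<Longrightarrow> F f = h (P f)"
  shows "card (F ` A) \<le> card (P ` A)"
proof -
  have "F ` A = h ` (P ` A)" using assms(2) by force
  thus ?thesis by (simp add: card_image_le assms(1))
qed

lemma len_concat_map:
  assumes "\<And>i. i \<in> set xs \<Longrightarrow> length (g i) = b"
  shows "length (concat (map g xs)) = length xs * b"
  using assms by (induction xs) auto

lemma step:
  fixes S :: "('p::finite) config set"
  assumes W: "working_DSS n k d \<alpha> \<alpha>' \<beta> M S"
    and t: "t < d" "d < n"
    and cr: "cr \<in> S"
    and IH: "card (psi cr t ` files M) \<le> card (UNIV::'p set) ^ E"
  shows "\<exists>cr'\<in>S. card (psi cr' (Suc t) ` files M) \<le> card (UNIV::'p set) ^ (E + (d - t) * \<beta>)"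
proof -
  let ?q = "card (UNIV::'p set)"
  define xs where "xs = [0..<t] @ [Suc t..<Suc d]"
  define H where "H = set xs"
  have dxs: "distinct xs" and sxs: "sorted xs" unfolding xs_def by (auto simp: sorted_append)
  have sl: "sorted_list_of_set H = xs"
    unfolding H_def sorted_list_of_set_sort_remdups
    using dxs sxs by (simp add: distinct_remdups_id sorted_sort_id)
  have Hsub: "H \<subseteq> {..<n} - {t}" unfolding H_def xs_def using t by auto
  have Hcard: "card H = d" unfolding H_def using distinct_card[OF dxs] t by (simp add: xs_def)
  have W3: "\<forall>cr\<in>S. \<forall>j<n. \<forall>H. H \<subseteq> {..<n} - {j} \<longrightarrow> card H = d \<longrightarrow>
        (\<exists>msg msg0 dec.
           (\<forall>i\<in>H. \<forall>f\<in>files M. length (msg i (fst cr i f)) = \<beta>) \<and>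
           (\<forall>f\<in>files M. length (msg0 (snd cr f)) = \<beta>) \<and>
           repaired cr j H msg msg0 dec \<in> S)"
    using W unfolding working_DSS_def by (elim conjE)
  have tn: "t < n" using t by simp
  from W3[rule_format, OF cr tn Hsub Hcard] obtain msg msg0 dec where
    ml: "\<forall>i\<in>H. \<forall>f\<in>files M. length (msg i (fst cr i f)) = \<beta>" and
    inS: "repaired cr t H msg msg0 dec \<in> S"
    by blast
  define cr' where "cr' = repaired cr t H msg msg0 dec"
  define Y where "Y f = concat (map (\<lambda>i. msg i (fst cr i f)) [Suc t..<Suc d])" for f
  define h where "h = (\<lambda>((\<phi>::nat \<Rightarrow> 'p list, s::'p list), y::'p list).
     ((\<lambda>i. if i < t then \<phi> i else if i = t then
        dec (concat (map (\<lambda>i. msg i (\<phi> i)) [0..<t]) @ y @ msg0 s) else []), s))"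
  have fac: "psi cr' (Suc t) f = h ((psi cr t f), Y f)" for f
  proof -
    have c: "concat (map (\<lambda>i. msg i (if i < t then fst cr i f else [])) [0..<t])
           = concat (map (\<lambda>i. msg i (fst cr i f)) [0..<t])"
      by (rule arg_cong[where f=concat], rule map_cong) auto
    have s': "snd cr' = snd cr" by (simp add: cr'_def repaired_def)
    have f1: "fst cr' i f = fst cr i f" if "i \<noteq> t" for i
      using that by (simp add: cr'_def repaired_def)
    have f2: "fst cr' t f = dec (concat (map (\<lambda>i. msg i (fst cr i f)) [0..<t]) @ Y f @ msg0 (snd cr f))"
      by (simp add: cr'_def repaired_def sl xs_def Y_def del: upt_Suc)
    have e: "(\<lambda>i. if i < Suc t then fst cr' i f else []) =
      (\<lambda>i. if i < t then fst cr i f else if i = t then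
        dec (concat (map (\<lambda>i. msg i (if i < t then fst cr i f else [])) [0..<t]) @ Y f @ msg0 (snd cr f)) else [])"
    proof
      fix i show "(if i < Suc t then fst cr' i f else []) = (if i < t then fst cr i f else if i = t then
        dec (concat (map (\<lambda>i. msg i (if i < t then fst cr i f else [])) [0..<t]) @ Y f @ msg0 (snd cr f)) else [])"
        using f1[of i] f2 c by (cases "i < t"; cases "i = t") auto
    qed
    show ?thesis unfolding psi_def h_def using e s' by (simp add: fun_eq_iff)
  qed
  define B where "B = {ys. set ys \<subseteq> (UNIV::'p set) \<and> length ys = (d - t) * \<beta>}"
  have finB: "finite B" unfolding B_def by (rule finite_lists_length_eq) simp
  have cardB: "card B = ?q ^ ((d - t) * \<beta>)" unfolding B_def by (rule card_lists_length_eq) simp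
  have YB: "Y f \<in> B" if "f \<in> files M" for f
  proof -
    have "length (Y f) = length [Suc t..<Suc d] * \<beta>"
      unfolding Y_def by (rule len_concat_map) (use ml that in \<open>auto simp: H_def xs_def\<close>)
    thus ?thesis unfolding B_def by (simp del: upt_Suc)
  qed
  have sub: "(\<lambda>f. (psi cr t f, Y f)) ` files M \<subseteq> (psi cr t ` files M) \<times> B"
    using YB by auto
  have "card (psi cr' (Suc t) ` files M) \<le> card ((\<lambda>f. (psi cr t f, Y f)) ` files M)"
    by (rule card_image_factor[OF finite_files, where h=h]) (simp add: fac)
  also have "\<dots> \<le> card ((psi cr t ` files M) \<times> B)"
    by (rule card_mono[OF _ sub]) (simp add: finite_files finB)
  also have "\<dots> = card (psi cr t ` files M) * card B" by (simp add: card_cartesian_product)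
  also have "\<dots> \<le> ?q ^ E * ?q ^ ((d - t) * \<beta>)" using IH cardB by simp
  also have "\<dots> = ?q ^ (E + (d - t) * \<beta>)" by (simp add: power_add)
  finally show ?thesis using inS cr'_def by blast
qed

theorem lemma3:
  fixes n k d \<alpha> \<alpha>' \<beta> M :: nat and S :: "('p::finite) config set"
  assumes "card (UNIV :: 'p set) \<ge> 2"
    and "1 \<le> k" and "k \<le> d" and "d < n"
    and "\<alpha>' < \<alpha>"
    and "\<alpha> = (d + 1) * \<beta>"
    and "M = (\<Sum>i<k. (d + 1 - i) * \<beta>)"
    and "working_DSS n k d \<alpha> \<alpha>' \<beta> M S"
  shows "\<alpha>' \<ge> k * \<beta>"
proof -
  let ?q = "card (UNIV::'p set)"
  define L where "L t = (\<Sum>i<t. (d - i) * \<beta>)" for t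
  have W: "working_DSS n k d \<alpha> \<alpha>' \<beta> M S" by fact
  have inv: "\<exists>cr\<in>S. card (psi cr t ` files M) \<le> ?q ^ (L t + \<alpha>')" if "t \<le> k" for t
    using that
  proof (induction t)
    case 0
    from W obtain cr where cr: "cr \<in> S" unfolding working_DSS_def by blast
    define B where "B = {ys. set ys \<subseteq> (UNIV::'p set) \<and> length ys = \<alpha>'}"
    have finB: "finite B" unfolding B_def by (rule finite_lists_length_eq) simp
    have cardB: "card B = ?q ^ \<alpha>'" unfolding B_def by (rule card_lists_length_eq) simp
    have vc: "valid_config n \<alpha> \<alpha>' M cr" using W cr unfolding working_DSS_def by blast
    have "psi cr 0 ` files M \<subseteq> {\<lambda>_. []} \<times> B"
      using vc unfolding psi_def valid_config_def B_def by auto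
    hence "card (psi cr 0 ` files M) \<le> card ({(\<lambda>_::nat. []::'p list)} \<times> B)"
      by (intro card_mono) (simp_all add: finB)
    also have "\<dots> = ?q ^ \<alpha>'" using cardB by (simp add: card_cartesian_product)
    finally show ?case using cr by (auto simp: L_def)
  next
    case (Suc t)
    then obtain cr where cr: "cr \<in> S" "card (psi cr t ` files M) \<le> ?q ^ (L t + \<alpha>')" by auto
    have "t < d" using Suc.prems assms by simp
    from step[OF W this assms(4) cr] obtain cr' where
      "cr' \<in> S" "card (psi cr' (Suc t) ` files M) \<le> ?q ^ (L t + \<alpha>' + (d - t) * \<beta>)" by blast
    moreover have "L t + \<alpha>' + (d - t) * \<beta> = L (Suc t) + \<alpha>'" by (simp add: L_def)
    ultimately show ?case by auto
  qed
  then obtain cr where cr: "cr \<in> S" and cb: "card (psi cr k ` files M) \<le> ?q ^ (L k + \<alpha>')" by blast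
  have rec: "reconstructs n k M cr" using W cr unfolding working_DSS_def by blast
  have "inj_on (psi cr k) (files M)"
  proof (rule inj_onI)
    fix f g assume f: "f \<in> files M" and g: "g \<in> files M" and e: "psi cr k f = psi cr k g"
    have "\<forall>i\<in>{..<k}. fst cr i f = fst cr i g"
    proof
      fix i assume "i \<in> {..<k}"
      hence "i < k" by simp
      from e have "fst (psi cr k f) i = fst (psi cr k g) i" by simp
      thus "fst cr i f = fst cr i g" using \<open>i < k\<close> by (simp add: psi_def)
    qed
    moreover have "{..<k} \<subseteq> {..<n}" using assms by auto
    moreover have "card {..<k} = k" by simp
    ultimately show "f = g" using rec f g unfolding reconstructs_def by blast
  qed
  hence "card (psi cr k ` files M) = ?q ^ M" by (simp add: card_image card_files)
  with cb have "?q ^ M \<le> ?q ^ (L k + \<alpha>')" by simp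
  hence le: "M \<le> L k + \<alpha>'"
    using assms(1) by (simp add: power_le_imp_le_exp)
  have "M = L k + k * \<beta>"
  proof -
    have "(\<Sum>i<k. (d + 1 - i) * \<beta>) = (\<Sum>i<k. (d - i) * \<beta> + \<beta>)"
      by (rule sum.cong) (use assms(3) in \<open>auto simp: Suc_diff_le algebra_simps\<close>)
    also have "\<dots> = L k + k * \<beta>" by (simp add: sum.distrib L_def)
    finally show ?thesis using assms(7) by simp
  qed
  with le show ?thesis by simp
qed

end
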